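(* Let $\sigma>0$, $\eta>0$, $\hat\alpha>0$, $h>0$, $r\ge0$, $a\in\mathbb{R}$, and for $\beta\ge0$ let $v_\beta$ denote the unique $C^1[0,\infty)$ solution of $\frac{\sigma^2}2v'(y)=\beta+\frac{\hat\alpha}4v(y)^2+\eta y(v(y)-\frac h\eta)-av(y)$, $y\ge0$, $v(0)=-r$. If $0\le\beta_1<\beta_2$, then $v_{\beta_1}(x)<v_{\beta_2}(x)$ for all $x>0$. *)

theory Defs
  imports "HOL-Analysis.Analysis"
begin

definition is_v_sol ::
  "real \<Rightarrow> real \<Rightarrow> real \<Rightarrow> real \<Rightarrow> real \<Rightarrow> real \<Rightarrow> real \<Rightarrow> (real \<Rightarrow> real) \<Rightarrow> bool" where
  "is_v_sol \<sigma> \<eta> \<alpha> h r a \<beta> v \<longleftrightarrow>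
     (\<exists>v'. continuous_on {0..} v' \<and>
        (\<forall>y\<ge>0. (v has_real_derivative v' y) (at y within {0..}) \<and>
            \<sigma>^2 / 2 * v' y = \<beta> + \<alpha> / 4 * (v y)^2 + \<eta> * y * (v y - h / \<eta>) - a * v y)) \<and>
     v 0 = - r"

end

theory Submission
  imports Defs
begin

theorem lemma16:
  fixes \<sigma> \<eta> \<alpha> h r a \<beta>1 \<beta>2 :: real and v1 v2 :: "real \<Rightarrow> real"
  assumes "\<sigma> > 0" "\<eta> > 0" "\<alpha> > 0" "h > 0" "r \<ge> 0"
    and "0 \<le> \<beta>1" "\<beta>1 < \<beta>2"
    and "is_v_sol \<sigma> \<eta> \<alpha> h r a \<beta>1 v1"
    and "is_v_sol \<sigma> \<eta> \<alpha> h r a \<beta>2 v2"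
  shows "\<forall>x>0. v1 x < v2 x"
proof -
  obtain d1 where d1: "\<forall>y\<ge>0. (v1 has_real_derivative d1 y) (at y within {0..}) \<and>
            \<sigma>^2 / 2 * d1 y = \<beta>1 + \<alpha> / 4 * (v1 y)^2 + \<eta> * y * (v1 y - h / \<eta>) - a * v1 y"
    and v10: "v1 0 = - r" using assms(8) unfolding is_v_sol_def by blast
  obtain d2 where d2: "\<forall>y\<ge>0. (v2 has_real_derivative d2 y) (at y within {0..}) \<and>
            \<sigma>^2 / 2 * d2 y = \<beta>2 + \<alpha> / 4 * (v2 y)^2 + \<eta> * y * (v2 y - h / \<eta>) - a * v2 y"
    and v20: "v2 0 = - r" using assms(9) unfolding is_v_sol_def by blast
  define w where "w = (\<lambda>y. v2 y - v1 y)"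
  have der: "(w has_real_derivative (d2 y - d1 y)) (at y within {0..})" if "y \<ge> 0" for y
    unfolding w_def using d1 d2 that by (auto intro!: derivative_eq_intros)
  have pos: "d2 y - d1 y > 0" if "y \<ge> 0" "w y = 0" for y
  proof -
    have e: "v2 y = v1 y" using that unfolding w_def by simp
    have "\<sigma>^2 / 2 * (d2 y - d1 y) = \<beta>2 - \<beta>1"
    proof -
      have "\<sigma>^2 / 2 * d1 y = \<beta>1 + \<alpha> / 4 * (v1 y)^2 + \<eta> * y * (v1 y - h / \<eta>) - a * v1 y"
        "\<sigma>^2 / 2 * d2 y = \<beta>2 + \<alpha> / 4 * (v1 y)^2 + \<eta> * y * (v1 y - h / \<eta>) - a * v1 y"
        using d1 d2 that(1) e by auto
      then show ?thesis by (simp only: right_diff_distrib)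
    qed
    moreover have "\<sigma>^2 / 2 > 0" using assms(1) by simp
    ultimately show ?thesis using assms(7) by (metis diff_gt_0_iff_gt zero_less_mult_pos)
  qed
  have cont: "continuous_on {0..} w"
    by (rule DERIV_continuous_on[where D="\<lambda>y. d2 y - d1 y"]) (use der in auto)
  have w0: "w 0 = 0" unfolding w_def using v10 v20 by simp
  obtain \<delta> where \<delta>: "\<delta> > 0" "\<forall>h>0. 0 + h \<in> {0..} \<longrightarrow> h < \<delta> \<longrightarrow> w 0 < w (0 + h)"
    using has_real_derivative_pos_inc_right[OF der[of 0] pos[of 0]] w0 by auto
  have wd: "w y > 0" if "0 < y" "y < \<delta>" for y using \<delta> that w0 by auto
  show ?thesis
  proof (rule ccontr)
    assume "\<not> ?thesis"
    then obtain x where x: "x > 0" "w x \<le> 0" unfolding w_def by force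
    define S where "S = {\<delta>/2..} \<inter> w -` {..0}"
    have cS: "continuous_on {\<delta>/2..} w"
      by (rule continuous_on_subset[OF cont]) (use \<delta> in auto)
    have clS: "closed S" unfolding S_def
      by (rule continuous_closed_preimage[OF cS]) auto
    have xS: "x \<in> S" unfolding S_def using x wd by (force simp: not_less)
    have bS: "bdd_below S" unfolding S_def by (auto intro: bdd_belowI[of _ "\<delta>/2"])
    define x0 where "x0 = Inf S"
    have x0S: "x0 \<in> S" unfolding x0_def using closed_contains_Inf[OF _ bS clS] xS by auto
    have le: "x0 \<le> y" if "y \<in> S" for y unfolding x0_def using bS that by (simp add: cInf_lower)
    have x0d: "x0 \<ge> \<delta>"
    proof (rule ccontr)
      assume "\<not> x0 \<ge> \<delta>"
      then show False using x0S wd[of x0] \<delta>(1) unfolding S_def by auto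
    qed
    have wx0: "w x0 \<le> 0" using x0S unfolding S_def by auto
    have wd2: "w (\<delta>/2) > 0" using wd \<delta>(1) by auto
    obtain z where z: "\<delta>/2 \<le> z" "z \<le> x0" "w z = 0"
      using IVT2'[of w x0 0 "\<delta>/2"] wx0 wd2 x0d \<delta>(1)
        continuous_on_subset[OF cS, of "{\<delta>/2..x0}"] by force
    have "z \<in> S" unfolding S_def using z by auto
    then have "z = x0" using le z by force
    then have wz: "w x0 = 0" using z by simp
    have x0p: "x0 \<ge> 0" using x0d \<delta> by simp
    obtain e where e: "e > 0" "\<forall>h>0. x0 - h \<in> {0..} \<longrightarrow> h < e \<longrightarrow> w (x0 - h) < w x0"
      using has_real_derivative_pos_inc_left[OF der[OF x0p] pos[OF x0p wz]] by blast
    define k where "k = min e (x0 - \<delta>/2) / 2"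
    have k: "k > 0" "k < e" "x0 - k > \<delta>/2" using e x0d \<delta>(1) unfolding k_def by auto
    have "w (x0 - k) < 0" using e k wz \<delta>(1) by auto
    then have "x0 - k \<in> S" unfolding S_def using k by auto
    then show False using le k by force
  qed
qed

end
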